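(* Let $x_e$ ($e\ge1$) be indeterminates and set $x_0=1$. Then in $\mathbb{Z}[x_1,x_2,\dots][[t]]$, $$\sum_{n=0}^\infty\sum_{\sigma\in\mathcal{S}(n)}N_\sigma\Big(\prod_{1^e\in\sigma}x_e\Big)t^n=\Big(\sum_{n=0}^\infty x_nt^n\Big)^p(1-t)^p(1-pt)^{-1},$$ where the product runs over the symbols of $\sigma$ of the form $1^e$ (i.e. with $d_j=1$), counted with multiplicity.
   Context: Fix a prime $p$. A splitting type of degree $n$ is a finite multiset $\sigma=(d_1^{e_1}\,d_2^{e_2}\cdots d_t^{e_t})$ of symbols $d_j^{e_j}$ with $d_j,e_j$ positive integers and $\sum_j d_je_j=n$; $\mathcal{S}(n)$ denotes the set of splitting types of degree $n$ ($\mathcal{S}(0)$ consists of the empty type). A monic $f\in\mathbb{F}_p[x]$ of degree $n$ has splitting type $\sigma$ if $f=\prod_{j=1}^tf_j^{e_j}$ with $f_j$ distinct monic irreducible polynomials with $\deg f_j=d_j$. $N_\sigma$ is the number of monic polynomials in $\mathbb{F}_p[x]$ of splitting type $\sigma$. *)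

theory Defs
  imports "HOL-Library.Multiset" "HOL-Library.Poly_Mapping"
    "HOL-Computational_Algebra.Polynomial" "HOL-Computational_Algebra.Formal_Power_Series"
begin

text \<open>Splitting types of degree n: multisets of symbols (d, e), read as d^e, with d, e > 0
  and sum of d*e equal to n.\<close>
definition splitting_types :: "nat \<Rightarrow> (nat \<times> nat) multiset set" where
  "splitting_types n = {\<sigma>. (\<forall>(d,e) \<in># \<sigma>. 0 < d \<and> 0 < e) \<and> (\<Sum>(d,e) \<in># \<sigma>. d * e) = n}"

definition has_splitting_type :: "'a::field poly \<Rightarrow> (nat \<times> nat) multiset \<Rightarrow> bool" where
  "has_splitting_type f \<sigma> \<longleftrightarrow> lead_coeff f = 1 \<and>
     (\<exists>F :: ('a poly \<times> nat) set. finite F \<and> inj_on fst F \<and>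
        (\<forall>(g,e) \<in> F. lead_coeff g = 1 \<and> irreducible g \<and> 0 < e) \<and>
        f = (\<Prod>(g,e) \<in> F. g ^ e) \<and>
        \<sigma> = image_mset (\<lambda>(g,e). (degree g, e)) (mset_set F))"

text \<open>N_sigma over the finite field 'a (instantiated with the field with p elements).\<close>
definition N_split :: "'a::field itself \<Rightarrow> (nat \<times> nat) multiset \<Rightarrow> nat" where
  "N_split _ \<sigma> = card {f :: 'a poly. has_splitting_type f \<sigma>}"

text \<open>Z[x_1, x_2, ...] as finitely supported functions from monomials monomials to int.\<close>
type_synonym zpoly = "(nat \<Rightarrow>\<^sub>0 nat) \<Rightarrow>\<^sub>0 int"

definition xvar :: "nat \<Rightarrow> zpoly" where
  "xvar e = (if e = 0 then 1 else Poly_Mapping.single (Poly_Mapping.single e 1) 1)"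

end

theory Submission
  imports Defs "HOL-Computational_Algebra.Polynomial_Factorial"
begin


context
begin

interpretation field_poly: 
  normalization_euclidean_semiring_multiplicative where zero = "0 :: 'a :: field poly"
    and one = 1 and plus = plus and minus = minus
    and times = times
    and normalize = "\<lambda>p. smult (inverse (lead_coeff p)) p"
    and unit_factor = "\<lambda>p. [:lead_coeff p:]"
    and euclidean_size = "\<lambda>p. if p = 0 then 0 else 2 ^ degree p"
    and divide = divide and modulo = modulo
  rewrites "dvd.dvd (times :: 'a poly \<Rightarrow> _) = Rings.dvd"
    and "comm_monoid_mult.prod_mset times 1 = prod_mset"
    and "comm_semiring_1.irreducible times 1 0 = irreducible"
    and "comm_semiring_1.prime_elem times 1 0 = prime_elem"
    and "comm_monoid_mult.prod (times :: 'a poly \<Rightarrow> _) 1 = prod"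
    and "power.power (1 :: 'a poly) times = power"
proof -
  show "comm_monoid_mult.prod (times :: 'a poly \<Rightarrow> _) 1 = prod"
    by (simp add: prod_dict)
  show "power.power (1 :: 'a poly) times = power"
    by (simp add: power_dict)
  show "dvd.dvd (times :: 'a poly \<Rightarrow> _) = Rings.dvd"
    by (simp add: dvd_dict)
  show "comm_monoid_mult.prod_mset times 1 = prod_mset"
    by (simp add: prod_mset_dict)
  show "comm_semiring_1.irreducible times 1 0 = irreducible"
    by (simp add: irreducible_dict)
  show "comm_semiring_1.prime_elem times 1 0 = prime_elem"
    by (simp add: prime_elem_dict)
  show "class.normalization_euclidean_semiring_multiplicative divide plus minus (0 :: 'a poly) times 1
    modulo (\<lambda>p. if p = 0 then 0 else 2 ^ degree p)
    (\<lambda>p. [:lead_coeff p:]) (\<lambda>p. smult (inverse (lead_coeff p)) p)"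
  proof (standard, fold dvd_dict)
    fix p :: "'a poly"
    show "[:lead_coeff p:] * smult (inverse (lead_coeff p)) p = p"
      by (cases "p = 0") simp_all
  next
    fix p :: "'a poly" assume "is_unit p"
    then show "[:lead_coeff p:] = p"
      by (elim is_unit_polyE) (auto simp: monom_0 one_poly_def field_simps)
  next
    fix p :: "'a poly" assume "p \<noteq> 0"
    then show "is_unit [:lead_coeff p:]"
      by (simp add: is_unit_pCons_iff)
  next
    fix a b :: "'a poly" assume "is_unit a"
    thus "[:lead_coeff (a * b):] = a * [:lead_coeff b:]"
      by (auto elim!: is_unit_polyE)
  qed (auto simp: lead_coeff_mult Rings.div_mult_mod_eq intro!: degree_mod_less' degree_mult_right_le)
qed




definition sig :: "'a::field poly \<Rightarrow> (nat \<times> nat) multiset" where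
  "sig f = image_mset (\<lambda>q. (degree q, field_poly.multiplicity q f)) (mset_set (field_poly.prime_factors f))"

lemma normalize_monic: "lead_coeff (f::'a::field poly) = 1 \<Longrightarrow> smult (inverse (lead_coeff f)) f = f"
  by simp

lemma prime_monic_poly:
  fixes q :: "'a::field poly"
  assumes "field_poly.prime q"
  shows "lead_coeff q = 1" "irreducible q" "degree q > 0"
proof -
  have q0: "q \<noteq> 0" and nq: "smult (inverse (lead_coeff q)) q = q" "prime_elem q"
    using assms by (auto simp: field_poly.prime_def)
  have "lead_coeff (smult (inverse (lead_coeff q)) q) = 1" using q0 by simp
  thus "lead_coeff q = 1" using nq by simp
  show "irreducible q" using nq(2) by (rule prime_elem_imp_irreducible)
  have "\<not> is_unit q" using nq(2) by (simp add: prime_elem_def)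
  thus "degree q > 0" using q0 by (auto simp: is_unit_iff_degree)
qed

lemma monic_irred_prime:
  fixes q :: "'a::field poly"
  assumes "lead_coeff q = 1" "irreducible q"
  shows "field_poly.prime q"
  using assms field_poly_irreducible_imp_prime normalize_monic by (auto simp: field_poly.prime_def)

lemma has_type_sig:
  fixes f :: "'a::field poly"
  assumes "lead_coeff f = 1"
  shows "has_splitting_type f (sig f)"
proof -
  have f0: "f \<noteq> 0" using assms by auto
  define F where "F = (\<lambda>q. (q, field_poly.multiplicity q f)) ` field_poly.prime_factors f"
  have inj: "inj_on (\<lambda>q. (q, field_poly.multiplicity q f)) (field_poly.prime_factors f)" by (auto simp: inj_on_def)
  have "finite F" by (simp add: F_def)
  moreover have "inj_on fst F" by (auto simp: F_def inj_on_def)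
  moreover have "\<forall>(g,e) \<in> F. lead_coeff g = 1 \<and> irreducible g \<and> 0 < e"
    using prime_monic_poly by (auto simp: F_def field_poly.prime_factors_multiplicity)
  moreover have "f = (\<Prod>(g,e) \<in> F. g ^ e)"
  proof -
    have "(\<Prod>(g,e) \<in> F. g ^ e) = (\<Prod>q\<in>field_poly.prime_factors f. q ^ field_poly.multiplicity q f)"
      unfolding F_def by (subst prod.reindex[OF inj]) simp
    also have "\<dots> = f" using field_poly.prod_prime_factors[OF f0] assms by simp
    finally show ?thesis by simp
  qed
  moreover have "sig f = image_mset (\<lambda>(g,e). (degree g, e)) (mset_set F)"
    unfolding F_def sig_def image_mset_mset_set[OF inj, symmetric]
    by (simp add: multiset.map_comp o_def)
  ultimately show ?thesis using assms unfolding has_splitting_type_def by blast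
qed

lemma has_type_imp_sig:
  fixes f :: "'a::field poly"
  assumes "has_splitting_type f \<sigma>"
  shows "lead_coeff f = 1 \<and> \<sigma> = sig f"
proof -
  obtain F :: "('a poly \<times> nat) set" where lc: "lead_coeff f = 1" and fin: "finite F"
    and inj: "inj_on fst F"
    and props: "\<forall>(g,e) \<in> F. lead_coeff g = 1 \<and> irreducible g \<and> 0 < e"
    and fF: "f = (\<Prod>(g,e) \<in> F. g ^ e)"
    and \<sigma>: "\<sigma> = image_mset (\<lambda>(g,e). (degree g, e)) (mset_set F)"
    using assms unfolding has_splitting_type_def by blast
  define S where "S = fst ` F"
  define h where "h g = (SOME e. (g,e) \<in> F)" for g
  have hF: "h g = e" if "(g,e) \<in> F" for g e
  proof -
    have "(g, h g) \<in> F" unfolding h_def using that by (rule someI)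
    have "(g, h g) = (g, e)" by (rule inj_onD[OF inj _ \<open>(g, h g) \<in> F\<close> that]) simp
    thus ?thesis by simp
  qed
  have Feq: "F = (\<lambda>g. (g, h g)) ` S"
  proof safe
    fix g e assume "(g,e) \<in> F" thus "(g,e) \<in> (\<lambda>g. (g, h g)) ` S"
      using hF unfolding S_def by force
  next
    fix g assume "g \<in> S" then obtain e where "(g,e) \<in> F" by (auto simp: S_def)
    thus "(g, h g) \<in> F" using hF by simp
  qed
  have injS: "inj_on (\<lambda>g. (g, h g)) S" by (auto simp: inj_on_def)
  have finS: "finite S" using fin by (simp add: S_def)
  have Sprops: "lead_coeff g = 1 \<and> irreducible g \<and> 0 < h g" if "g \<in> S" for g
    using that props hF unfolding S_def by fastforce
  define fn where "fn q = (if q \<in> S then h q else 0)" for q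
  have fprod: "f = (\<Prod>g\<in>S. g ^ fn g)"
  proof -
    have "f = (\<Prod>g\<in>S. g ^ h g)" unfolding fF Feq by (subst prod.reindex[OF injS]) simp
    also have "\<dots> = (\<Prod>g\<in>S. g ^ fn g)" by (rule prod.cong) (auto simp: fn_def)
    finally show ?thesis .
  qed
  have "S = {q. 0 < fn q}" using Sprops by (auto simp: fn_def)
  moreover have "\<forall>q\<in>S. field_poly.prime q" using Sprops monic_irred_prime by blast
  moreover have "smult (inverse (lead_coeff f)) f = (\<Prod>g\<in>S. g ^ fn g)" using fprod lc by (simp add: normalize_monic)
  ultimately have U: "S = field_poly.prime_factors f \<and> (\<forall>q. field_poly.prime q \<longrightarrow> fn q = field_poly.multiplicity q f)"
    using finS by (intro field_poly.prime_factorization_unique'') auto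
  have "\<sigma> = image_mset (\<lambda>g. (degree g, h g)) (mset_set S)"
    unfolding \<sigma> Feq image_mset_mset_set[OF injS, symmetric]
    by (simp add: multiset.map_comp o_def)
  also have "\<dots> = sig f"
    unfolding sig_def U[THEN conjunct1, symmetric]
  proof (rule image_mset_cong)
    fix g assume "g \<in># mset_set S"
    hence "g \<in> S" using finS by simp
    hence "field_poly.prime g" "fn g = h g" using \<open>\<forall>q\<in>S. field_poly.prime q\<close> by (auto simp: fn_def)
    thus "(degree g, h g) = (degree g, field_poly.multiplicity g f)" using U by auto
  qed
  finally show ?thesis using lc by simp
qed

lemma has_type_iff: "has_splitting_type (f::'a::field poly) \<sigma> \<longleftrightarrow> lead_coeff f = 1 \<and> \<sigma> = sig f"
  using has_type_sig has_type_imp_sig by blast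

thm has_type_iff has_type_imp_sig has_type_sig

lemma sig_in:
  fixes f :: "'a::field poly"
  assumes lc: "lead_coeff f = 1"
  shows "sig f \<in> splitting_types (degree f)"
proof -
  have f0: "f \<noteq> 0" using lc by auto
  have PF: "field_poly.prime q \<and> 0 < field_poly.multiplicity q f" if "q \<in> field_poly.prime_factors f" for q
    using that by (simp add: field_poly.prime_factors_multiplicity)
  have A: "\<forall>(d,e) \<in># sig f. 0 < d \<and> 0 < e"
    using PF prime_monic_poly(3) by (auto simp: sig_def)
  have "(\<Sum>(d,e) \<in># sig f. d * e) = (\<Sum>q\<in>field_poly.prime_factors f. degree q * field_poly.multiplicity q f)"
    by (simp add: sig_def sum_unfold_sum_mset multiset.map_comp o_def)
  also have "\<dots> = (\<Sum>q\<in>field_poly.prime_factors f. degree (q ^ field_poly.multiplicity q f))"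
  proof (rule sum.cong[OF refl])
    fix q assume "q \<in> field_poly.prime_factors f"
    hence "q \<noteq> 0" using PF prime_monic_poly(1) by fastforce
    thus "degree q * field_poly.multiplicity q f = degree (q ^ field_poly.multiplicity q f)"
      by (simp add: degree_power_eq)
  qed
  also have "\<dots> = degree (\<Prod>q\<in>field_poly.prime_factors f. q ^ field_poly.multiplicity q f)"
  proof (rule degree_prod_sum_eq[symmetric])
    fix q assume "q \<in> field_poly.prime_factors f"
    hence "q \<noteq> 0" using PF prime_monic_poly(1) by fastforce
    thus "q ^ field_poly.multiplicity q f \<noteq> 0" by simp
  qed
  also have "\<dots> = degree f" using field_poly.prod_prime_factors[OF f0] lc by simp
  finally show ?thesis using A by (simp add: splitting_types_def)
qed

lemma mult_lin_order:
  fixes f :: "'a::field poly"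
  assumes "f \<noteq> 0"
  shows "field_poly.multiplicity [:-a,1:] f = order a f"
  by (rule field_poly.multiplicity_eqI[OF order_1 order_2[OF assms]])

lemma deg1_monic:
  fixes q :: "'a::field poly"
  assumes "degree q = 1" "lead_coeff q = 1"
  shows "q = [:-(- coeff q 0), 1:]"
proof (rule poly_eqI)
  fix n show "coeff q n = coeff [:-(- coeff q 0), 1:] n"
  proof (cases n)
    case 0 thus ?thesis by simp
  next
    case (Suc m)
    show ?thesis
    proof (cases m)
      case 0 thus ?thesis using assms Suc by simp
    next
      case (Suc k)
      hence "coeff q n = 0" using assms \<open>n = Suc m\<close> by (simp add: coeff_eq_0)
      thus ?thesis using Suc \<open>n = Suc m\<close> by (simp add: coeff_pCons)
    qed
  qed
qed

lemma lin_in_PF: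
  fixes f :: "'a::field poly"
  assumes "f \<noteq> 0"
  shows "{q\<in>field_poly.prime_factors f. degree q = 1} = (\<lambda>a. [:-a,1:]) ` {a. poly f a = 0}"
proof safe
  fix q assume q: "q \<in> field_poly.prime_factors f" and d: "degree q = 1"
  have pq: "field_poly.prime q" and qf: "q dvd f" using q by (auto simp: field_poly.in_prime_factors_iff)
  have "q = [:-(- coeff q 0), 1:]" using deg1_monic[OF d prime_monic_poly(1)[OF pq]] .
  moreover have "poly f (- coeff q 0) = 0" using qf calculation by (metis poly_eq_0_iff_dvd)
  ultimately show "q \<in> (\<lambda>a. [:-a,1:]) ` {a. poly f a = 0}" by blast
next
  fix a assume "poly f a = 0"
  hence dv: "[:-a,1:] dvd f" by (simp add: poly_eq_0_iff_dvd)
  have "irreducible [:-a,1::'a:]" by (rule irreducible_linear_field_poly) simp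
  hence "field_poly.prime [:-a,1:]" by (intro monic_irred_prime) simp_all
  thus "[:-a,1:] \<in> field_poly.prime_factors f" using dv assms by (simp add: field_poly.in_prime_factors_iff)
  show "degree [:-a,1::'a:] = 1" by simp
qed

lemma sig_weight:
  fixes f :: "'a::{field,finite} poly"
  assumes lc: "lead_coeff f = 1"
  shows "prod_mset (image_mset (\<lambda>(d,e). xvar e) (filter_mset (\<lambda>(d,e). d = 1) (sig f)))
       = (\<Prod>a\<in>UNIV. xvar (order a f))"
proof -
  have f0: "f \<noteq> 0" using lc by auto
  have inj: "inj_on (\<lambda>a::'a. [:-a,1:]) {a. poly f a = 0}" by (rule inj_onI) simp
  have "prod_mset (image_mset (\<lambda>(d,e). xvar e) (filter_mset (\<lambda>(d,e). d = 1) (sig f)))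
      = (\<Prod>q\<in>{q\<in>field_poly.prime_factors f. degree q = 1}. xvar (field_poly.multiplicity q f))"
    by (simp add: sig_def filter_mset_image_mset prod_unfold_prod_mset multiset.map_comp o_def)
  also have "\<dots> = (\<Prod>a\<in>{a. poly f a = 0}. xvar (field_poly.multiplicity [:-a,1:] f))"
    unfolding lin_in_PF[OF f0] by (subst prod.reindex[OF inj]) simp
  also have "\<dots> = (\<Prod>a\<in>{a. poly f a = 0}. xvar (order a f))"
    by (simp add: mult_lin_order[OF f0])
  also have "\<dots> = (\<Prod>a\<in>UNIV. xvar (order a f))"
  proof (rule prod.mono_neutral_left)
    show "\<forall>a\<in>UNIV - {a. poly f a = 0}. xvar (order a f) = 1"
      using f0 by (auto simp: order_eq_0_iff xvar_def)
  qed simp_all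
  finally show ?thesis .
qed

end


definition MC :: "'a::field set \<Rightarrow> nat \<Rightarrow> 'a poly set" where
  "MC C n = {f. lead_coeff f = 1 \<and> degree f = n \<and> (\<forall>a. a \<notin> C \<longrightarrow> poly f a \<noteq> 0)}"

lemma MC_0: "MC (UNIV::'a::field set) 0 = {1}"
proof (rule set_eqI, rule iffI)
  fix f :: "'a poly" assume "f \<in> MC UNIV 0"
  hence d: "degree f = 0" and l: "lead_coeff f = 1" unfolding MC_def by blast+
  have "f = [:coeff f 0:]" using degree_0_id[OF d] by simp
  also have "coeff f 0 = 1" using l d by simp
  finally show "f \<in> {1}" by (simp add: one_pCons)
next
  fix f :: "'a poly" assume "f \<in> {1}"
  thus "f \<in> MC UNIV 0" by (simp add: MC_def)
qed

lemma MC_Suc: "MC (UNIV::'a::field set) (Suc n) = (\<lambda>(a,g). pCons a g) ` (UNIV \<times> MC UNIV n)"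
proof (rule set_eqI, rule iffI)
  fix f :: "'a poly" assume f: "f \<in> MC UNIV (Suc n)"
  hence d: "degree f = Suc n" and l: "lead_coeff f = 1" unfolding MC_def by blast+
  obtain a q where fq: "f = pCons a q" by (rule pCons_cases)
  have q0: "q \<noteq> 0"
  proof
    assume "q = 0"
    hence "degree f = 0" using fq by (simp only: degree_pCons_0)
    thus False using d by simp
  qed
  have "degree q = n" using d unfolding fq degree_pCons_eq[OF q0] by simp
  moreover have "lead_coeff q = 1" using l unfolding fq lead_coeff_pCons(1)[OF q0] .
  ultimately have "q \<in> MC UNIV n" unfolding MC_def by blast
  hence "(a, q) \<in> UNIV \<times> MC UNIV n" by blast
  thus "f \<in> (\<lambda>(a,g). pCons a g) ` (UNIV \<times> MC UNIV n)" unfolding fq by (rule rev_image_eqI) simp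
next
  fix f :: "'a poly" assume "f \<in> (\<lambda>(a,g). pCons a g) ` (UNIV \<times> MC UNIV n)"
  then obtain x where x: "x \<in> UNIV \<times> MC UNIV n" and fx: "f = (\<lambda>(a,g). pCons a g) x" by (rule imageE)
  obtain a q where "x = (a, q)" by (cases x)
  hence fq: "f = pCons a q" and q: "q \<in> MC UNIV n" using x fx by simp_all
  have d: "degree q = n" and l: "lead_coeff q = 1" using q unfolding MC_def by blast+
  have q0: "q \<noteq> 0" using l by auto
  have "degree f = Suc n" unfolding fq degree_pCons_eq[OF q0] d ..
  moreover have "lead_coeff f = 1" unfolding fq lead_coeff_pCons(1)[OF q0] l ..
  ultimately show "f \<in> MC UNIV (Suc n)" unfolding MC_def by blast
qed

lemma card_MC: "card (MC (UNIV::'a::{field,finite} set) n) = card (UNIV::'a set) ^ n"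
proof (induction n)
  case 0 thus ?case by (simp add: MC_0)
next
  case (Suc n)
  have inj: "inj_on (\<lambda>(a,g). pCons a g) ((UNIV::'a set) \<times> MC (UNIV::'a set) n)"
    by (rule inj_onI) auto
  have "card (MC (UNIV::'a set) (Suc n)) = card ((UNIV::'a set) \<times> MC (UNIV::'a set) n)"
    by (subst MC_Suc) (rule card_image[OF inj])
  also have "\<dots> = card (UNIV::'a set) * card (UNIV::'a set) ^ n"
    by (simp only: card_cartesian_product Suc)
  finally show ?case by simp
qed

lemma finite_MC: "finite (MC (C::'a::{field,finite} set) n)"
proof -
  have "card (UNIV::'a set) > 0" by (simp add: card_gt_0_iff)
  hence "card (MC (UNIV::'a set) n) > 0" unfolding card_MC by simp
  hence "finite (MC (UNIV::'a set) n)" by (rule card_ge_0_finite)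
  moreover have "MC C n \<subseteq> MC UNIV n" by (auto simp: MC_def)
  ultimately show ?thesis by (rule finite_subset[rotated])
qed


unbundle fps_syntax

definition GC :: "(nat \<Rightarrow> 'b::comm_ring_1) \<Rightarrow> 'a::field set \<Rightarrow> 'b fps" where
  "GC y C = Abs_fps (\<lambda>n. \<Sum>f\<in>MC C n. \<Prod>a\<in>C. y (order a f))"

lemma lin_pow_monic: "lead_coeff ([:-b,1:]^i :: 'a::field poly) = 1"
  by (simp add: lead_coeff_power)

lemma lin_pow_degree: "degree ([:-b,1:]^i :: 'a::field poly) = i"
  by (simp add: degree_power_eq)

lemma lin_pow_nz: "([:-b,1:]^i :: 'a::field poly) \<noteq> 0"
  by simp

lemma order_lin_pow_other: "a \<noteq> b \<Longrightarrow> order a ([:-b,1:]^i :: 'a::field poly) = 0"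
  by (rule order_0I) (simp add: poly_power)

lemma MC_step_bij:
  fixes C :: "'a::{field,finite} set"
  assumes bC: "b \<notin> C"
  shows "bij_betw (\<lambda>(i,g). [:-b,1:]^i * g) (SIGMA i:{0..n}. MC C (n - i)) (MC (insert b C) n)"
proof -
  define \<phi> :: "nat \<times> 'a poly \<Rightarrow> 'a poly" where "\<phi> = (\<lambda>(i,g). [:-b,1:]^i * g)"
  define \<psi> :: "'a poly \<Rightarrow> nat \<times> 'a poly" where "\<psi> = (\<lambda>f. (order b f, f div [:-b,1:]^order b f))"
  have 1: "\<forall>x\<in>(SIGMA i:{0..n}. MC C (n - i)). \<psi> (\<phi> x) = x"
  proof safe
    fix i g assume i: "i \<in> {0..n}" and g: "g \<in> MC C (n - i)"
    have gnz: "g \<noteq> 0" and gb: "poly g b \<noteq> 0" using g bC by (auto simp: MC_def)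
    have "order b ([:-b,1:]^i * g) = i"
      using gnz gb by (simp add: order_mult order_power_n_n order_0I)
    thus "\<psi> (\<phi> (i, g)) = (i, g)"
      by (simp add: \<phi>_def \<psi>_def)
  qed
  have 2: "\<forall>f\<in>MC (insert b C) n. \<phi> (\<psi> f) = f"
  proof
    fix f assume "f \<in> MC (insert b C) n"
    have "[:-b,1:]^order b f dvd f" by (rule order_1)
    thus "\<phi> (\<psi> f) = f"
      by (simp add: \<phi>_def \<psi>_def)
  qed
  have 3: "\<phi> ` (SIGMA i:{0..n}. MC C (n - i)) \<subseteq> MC (insert b C) n"
  proof safe
    fix i g assume i: "i \<in> {0..n}" and g: "g \<in> MC C (n - i)"
    have gnz: "g \<noteq> 0" using g by (auto simp: MC_def)
    have "lead_coeff g = 1" using g unfolding MC_def by blast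
    hence "lead_coeff ([:-b,1:]^i * g) = 1" by (simp add: lead_coeff_mult lin_pow_monic)
    moreover have "degree ([:-b,1:]^i * g) = n" using g i gnz
      by (simp add: degree_mult_eq lin_pow_degree MC_def)
    moreover have "poly ([:-b,1:]^i * g) a \<noteq> 0" if "a \<notin> insert b C" for a
      using that g by (simp add: MC_def poly_power)
    ultimately show "\<phi> (i, g) \<in> MC (insert b C) n"
      by (auto simp: MC_def \<phi>_def)
  qed
  have 4: "\<psi> ` MC (insert b C) n \<subseteq> (SIGMA i:{0..n}. MC C (n - i))"
  proof (rule image_subsetI)
    fix f assume f: "f \<in> MC (insert b C) n"
    define i where "i = order b f"
    define g where "g = f div [:-b,1:]^i"
    have fnz: "f \<noteq> 0" using f by (auto simp: MC_def)
    have fg: "f = [:-b,1:]^i * g" unfolding g_def i_def using order_1[of b f] by simp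
    have gnz: "g \<noteq> 0" using fnz fg by auto
    have "i \<le> n" using order_degree[OF fnz, of b] f by (simp add: i_def MC_def)
    have "order b f = i + order b g" using fg gnz by (simp add: order_mult order_power_n_n)
    hence ob: "order b g = 0" by (simp add: i_def)
    have lc: "lead_coeff g = 1" using f fg by (simp add: lead_coeff_mult lin_pow_monic MC_def)
    have "degree f = n" using f unfolding MC_def by blast
    moreover have "degree f = i + degree g" using fg gnz by (simp add: degree_mult_eq lin_pow_degree)
    ultimately have dg: "degree g = n - i" by simp
    have "poly g a \<noteq> 0" if "a \<notin> C" for a
    proof (cases "a = b")
      case True thus ?thesis using ob gnz order_root by blast
    next
      case False
      hence "poly f a \<noteq> 0" using that f by (auto simp: MC_def)
      thus ?thesis using fg by simp
    qed
    hence "g \<in> MC C (n - i)" using lc dg by (simp add: MC_def)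
    thus "\<psi> f \<in> (SIGMA i:{0..n}. MC C (n - i))"
      using \<open>i \<le> n\<close> by (simp add: i_def g_def \<psi>_def)
  qed
  have "bij_betw \<phi> (SIGMA i:{0..n}. MC C (n - i)) (MC (insert b C) n)"
    by (rule bij_betw_byWitness[OF 1 2 3 4])
  thus ?thesis by (simp add: \<phi>_def)
qed

lemma GC_step:
  fixes C :: "'a::{field,finite} set" and y :: "nat \<Rightarrow> 'b::comm_ring_1"
  assumes bC: "b \<notin> C"
  shows "GC y (insert b C) = Abs_fps y * GC y C"
proof (rule fps_ext)
  fix n
  have fin: "finite C" by simp
  have "(Abs_fps y * GC y C) $ n = (\<Sum>i=0..n. y i * (\<Sum>g\<in>MC C (n-i). \<Prod>a\<in>C. y (order a g)))"
    by (simp add: fps_mult_nth GC_def)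
  also have "\<dots> = (\<Sum>i=0..n. \<Sum>g\<in>MC C (n-i). y i * (\<Prod>a\<in>C. y (order a g)))"
    by (simp add: sum_distrib_left)
  also have "\<dots> = (\<Sum>(i,g)\<in>(SIGMA i:{0..n}. MC C (n - i)). y i * (\<Prod>a\<in>C. y (order a g)))"
    by (rule sum.Sigma) (auto simp: finite_MC)
  also have "\<dots> = (\<Sum>(i,g)\<in>(SIGMA i:{0..n}. MC C (n - i)).
                     \<Prod>a\<in>insert b C. y (order a ([:-b,1:]^i * g)))"
  proof (rule sum.cong[OF refl], clarify)
    fix i g assume i: "i \<in> {0..n}" and g: "g \<in> MC C (n - i)"
    have gnz: "g \<noteq> 0" and gb: "poly g b \<noteq> 0" using g bC by (auto simp: MC_def)
    have "order b ([:-b,1:]^i * g) = i"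
      using gnz gb by (simp add: order_mult order_power_n_n order_0I)
    moreover have "order a ([:-b,1:]^i * g) = order a g" if "a \<in> C" for a
    proof -
      have "a \<noteq> b" using that bC by auto
      thus ?thesis using gnz by (simp add: order_mult order_lin_pow_other)
    qed
    ultimately show "y i * (\<Prod>a\<in>C. y (order a g)) = (\<Prod>a\<in>insert b C. y (order a ([:-b,1:]^i * g)))"
      using bC fin by (simp add: prod.insert)
  qed
  also have "\<dots> = (\<Sum>f\<in>MC (insert b C) n. \<Prod>a\<in>insert b C. y (order a f))"
    using sum.reindex_bij_betw[OF MC_step_bij[OF bC, of n], of "\<lambda>f. \<Prod>a\<in>insert b C. y (order a f)"]
    by (simp add: case_prod_unfold)
  finally show "GC y (insert b C) $ n = (Abs_fps y * GC y C) $ n" by (simp add: GC_def)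
qed

lemma GC_all:
  fixes C :: "'a::{field,finite} set" and y :: "nat \<Rightarrow> 'b::comm_ring_1"
  shows "GC y C = Abs_fps y ^ card C * GC y ({}::'a set)"
proof -
  have "finite C" by simp
  thus ?thesis
  proof (induction C rule: finite_induct)
    case empty thus ?case by simp
  next
    case (insert b C) thus ?case by (simp add: GC_step mult.assoc)
  qed
qed

lemma GC_empty: "GC y ({}::'a::{field,finite} set) = Abs_fps (\<lambda>n. of_nat (card (MC ({}::'a set) n)))"
  by (simp add: GC_def)


unbundle fps_syntax

lemma ones_geom: "(1 - fps_X) * Abs_fps (\<lambda>_. 1::'b::comm_ring_1) = 1"
proof (rule fps_ext)
  fix n
  show "((1 - fps_X) * Abs_fps (\<lambda>_. 1::'b)) $ n = 1 $ n"
    by (cases n) (simp_all add: algebra_simps)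
qed

lemma pow_geom: "(1 - of_nat p * fps_X) * Abs_fps (\<lambda>n. of_nat (p ^ n) ::'b::comm_ring_1) = 1"
proof (rule fps_ext)
  fix n
  have e: "of_nat p * fps_X = fps_const (of_nat p :: 'b) * fps_X" by (simp add: fps_of_nat)
  show "((1 - of_nat p * fps_X) * Abs_fps (\<lambda>n. of_nat (p ^ n) ::'b)) $ n = 1 $ n"
    unfolding e by (cases n) (simp_all add: algebra_simps mult.assoc)
qed

lemma GC_ones: "GC (\<lambda>_. 1::'b::comm_ring_1) (UNIV::'a::{field,finite} set)
   = Abs_fps (\<lambda>n. of_nat (card (UNIV::'a set) ^ n))"
  by (simp add: GC_def card_MC)

lemma GC_main:
  fixes y :: "nat \<Rightarrow> 'b::comm_ring_1"
  assumes "card (UNIV::'a::{field,finite} set) = p"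
  shows "GC y (UNIV::'a set) = Abs_fps y ^ p * (1 - fps_X) ^ p * fps_right_inverse (1 - of_nat p * fps_X) 1"
proof -
  define R where "R = GC y ({}::'a set)"
  define P where "P = Abs_fps (\<lambda>n. of_nat (p ^ n) ::'b)"
  define inv where "inv = fps_right_inverse (1 - of_nat p * fps_X :: 'b fps) 1"
  have R': "GC (\<lambda>_. 1::'b) ({}::'a set) = R" unfolding R_def by (simp add: GC_empty)
  have "P = Abs_fps (\<lambda>_. 1::'b) ^ p * R"
    using GC_all[of "\<lambda>_. 1::'b" "UNIV::'a set"] GC_ones[where 'b='b, where 'a='a] assms R'
    by (simp add: P_def)
  hence PR: "(1 - fps_X) ^ p * P = R"
    by (simp add: mult.assoc[symmetric] power_mult_distrib[symmetric] ones_geom)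
  have inv1: "(1 - of_nat p * fps_X) * inv = 1"
    unfolding inv_def by (rule fps_right_inverse) simp
  have "P = P * ((1 - of_nat p * fps_X) * inv)" by (simp add: inv1)
  also have "\<dots> = ((1 - of_nat p * fps_X) * P) * inv" by (simp add: algebra_simps)
  also have "\<dots> = inv" unfolding P_def pow_geom by simp
  finally have Pinv: "P = inv" .
  have "GC y (UNIV::'a set) = Abs_fps y ^ p * R"
    using GC_all[of y "UNIV::'a set"] assms by (simp add: R_def)
  also have "\<dots> = Abs_fps y ^ p * (1 - fps_X) ^ p * inv"
    by (simp add: PR[symmetric] Pinv mult.assoc)
  finally show ?thesis by (simp add: inv_def)
qed


unbundle fps_syntax

lemma size_le_sum:
  fixes \<sigma> :: "(nat \<times> nat) multiset"
  assumes "\<forall>(d,e) \<in># \<sigma>. 0 < d \<and> 0 < e"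
  shows "size \<sigma> \<le> (\<Sum>(d,e) \<in># \<sigma>. d * e) \<and> (\<forall>x\<in>#\<sigma>. fst x * snd x \<le> (\<Sum>(d,e) \<in># \<sigma>. d * e))"
  using assms
proof (induction \<sigma>)
  case empty thus ?case by simp
next
  case (add x M)
  obtain d e where x: "x = (d,e)" by (cases x)
  have "0 < d" "0 < e" using add.prems x by auto
  hence one: "1 \<le> d * e" by simp
  have IH: "size M \<le> (\<Sum>(d,e) \<in># M. d * e) \<and> (\<forall>x\<in>#M. fst x * snd x \<le> (\<Sum>(d,e) \<in># M. d * e))"
    using add.IH add.prems by auto
  have "Suc (size M) \<le> d * e + (\<Sum>(d,e) \<in># M. d * e)" using one IH by linarith
  moreover have "\<forall>y\<in>#add_mset x M. fst y * snd y \<le> d * e + (\<Sum>(d,e) \<in># M. d * e)"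
    using IH x by force
  ultimately show ?case using x by simp
qed

lemma finite_ST: "finite (splitting_types n)"
proof -
  have "splitting_types n \<subseteq> (\<Union>k\<in>{..n}. multisets_of_size ({1..n}\<times>{1..n}) k)"
  proof
    fix \<sigma> assume s: "\<sigma> \<in> splitting_types n"
    hence pos: "\<forall>(d,e) \<in># \<sigma>. 0 < d \<and> 0 < e" and sm: "(\<Sum>(d,e) \<in># \<sigma>. d * e) = n"
      by (auto simp: splitting_types_def)
    note L = size_le_sum[OF pos]
    have "set_mset \<sigma> \<subseteq> {1..n}\<times>{1..n}"
    proof
      fix x assume x: "x \<in># \<sigma>"
      obtain d e where xe: "x = (d,e)" by (cases x)
      have "0 < d" "0 < e" using pos x xe by fastforce+
      moreover have "d * e \<le> n" using L x xe sm by fastforce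
      moreover have "d \<le> d * e" "e \<le> d * e" using \<open>0 < d\<close> \<open>0 < e\<close> by simp_all
      ultimately have "d \<le> n" "e \<le> n" by linarith+
      thus "x \<in> {1..n}\<times>{1..n}" using \<open>0 < d\<close> \<open>0 < e\<close> xe by auto
    qed
    moreover have "size \<sigma> \<le> n" using L sm by simp
    ultimately show "\<sigma> \<in> (\<Union>k\<in>{..n}. multisets_of_size ({1..n}\<times>{1..n}) k)"
      by (auto simp: multisets_of_size_def)
  qed
  moreover have "finite (\<Union>k\<in>{..n}. multisets_of_size ({1..n}\<times>{1..n}) k)"
    by (rule finite_UN_I) (simp_all add: finite_multisets_of_size)
  ultimately show ?thesis by (rule finite_subset)
qed

lemma type_set:
  assumes "\<sigma> \<in> splitting_types n"
  shows "{f :: 'a::{field,finite} poly. has_splitting_type f \<sigma>} = {f \<in> MC UNIV n. sig f = \<sigma>}"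
proof safe
  fix f :: "'a poly" assume "has_splitting_type f \<sigma>"
  hence lc: "lead_coeff f = 1" and s: "\<sigma> = sig f" by (auto simp: has_type_iff)
  have "sig f \<in> splitting_types (degree f)" using lc by (rule sig_in)
  hence "degree f = n" using assms s by (simp add: splitting_types_def)
  thus "f \<in> MC UNIV n" using lc unfolding MC_def by blast
  show "sig f = \<sigma>" using s by simp
next
  fix f :: "'a poly" assume "f \<in> MC UNIV n"
  hence "lead_coeff f = 1" unfolding MC_def by blast
  thus "has_splitting_type f (sig f)" by (simp add: has_type_iff)
qed

lemma LHS_coeff:
  fixes F :: "'a::{field,finite} itself"
  shows "(\<Sum>\<sigma> \<in> splitting_types n.
            of_nat (N_split F \<sigma>) *
            prod_mset (image_mset (\<lambda>(d,e). xvar e) (filter_mset (\<lambda>(d,e). d = 1) \<sigma>)))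
       = GC xvar (UNIV::'a set) $ n"
proof -
  define wt where "wt \<sigma> = prod_mset (image_mset (\<lambda>(d,e). xvar e) (filter_mset (\<lambda>(d::nat,e). d = 1) \<sigma>))" for \<sigma>
  have "(\<Sum>\<sigma> \<in> splitting_types n. of_nat (N_split F \<sigma>) * wt \<sigma>)
      = (\<Sum>\<sigma> \<in> splitting_types n. \<Sum>f\<in>{f \<in> MC (UNIV::'a set) n. sig f = \<sigma>}. wt (sig f))"
  proof (rule sum.cong[OF refl])
    fix \<sigma> assume s: "\<sigma> \<in> splitting_types n"
    have "N_split F \<sigma> = card {f \<in> MC (UNIV::'a set) n. sig f = \<sigma>}"
      unfolding N_split_def type_set[OF s] ..
    thus "of_nat (N_split F \<sigma>) * wt \<sigma> = (\<Sum>f\<in>{f \<in> MC (UNIV::'a set) n. sig f = \<sigma>}. wt (sig f))"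
      by simp
  qed
  also have "\<dots> = (\<Sum>f\<in>MC (UNIV::'a set) n. wt (sig f))"
  proof (rule sum.group)
    show "finite (MC (UNIV::'a set) n)" by (rule finite_MC)
    show "finite (splitting_types n)" by (rule finite_ST)
    show "sig ` MC (UNIV::'a set) n \<subseteq> splitting_types n"
    proof (rule image_subsetI)
      fix f assume "f \<in> MC (UNIV::'a set) n"
      hence "lead_coeff f = 1" "degree f = n" unfolding MC_def by blast+
      thus "sig f \<in> splitting_types n" using sig_in by metis
    qed
  qed
  also have "\<dots> = (\<Sum>f\<in>MC (UNIV::'a set) n. \<Prod>a\<in>UNIV. xvar (order a f))"
  proof (rule sum.cong[OF refl])
    fix f assume "f \<in> MC (UNIV::'a set) n"
    hence "lead_coeff f = 1" unfolding MC_def by blast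
    thus "wt (sig f) = (\<Prod>a\<in>UNIV. xvar (order a f))" unfolding wt_def by (rule sig_weight)
  qed
  also have "\<dots> = GC xvar (UNIV::'a set) $ n" by (simp add: GC_def)
  finally show ?thesis unfolding wt_def .
qed

theorem corollary2p3:
  fixes p :: nat and F :: "'a::{field,finite} itself"
  assumes "prime p" and "card (UNIV :: 'a set) = p"
  shows "Abs_fps (\<lambda>n. \<Sum>\<sigma> \<in> splitting_types n.
            of_nat (N_split F \<sigma>) *
            prod_mset (image_mset (\<lambda>(d,e). xvar e) (filter_mset (\<lambda>(d,e). d = 1) \<sigma>)))
       = (Abs_fps xvar) ^ p * (1 - fps_X) ^ p * fps_right_inverse (1 - of_nat p * fps_X) 1"
proof -
  have "Abs_fps (\<lambda>n. \<Sum>\<sigma> \<in> splitting_types n.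
            of_nat (N_split F \<sigma>) *
            prod_mset (image_mset (\<lambda>(d,e). xvar e) (filter_mset (\<lambda>(d,e). d = 1) \<sigma>)))
       = GC xvar (UNIV::'a set)"
    by (rule fps_ext) (simp only: fps_nth_Abs_fps LHS_coeff)
  also have "\<dots> = (Abs_fps xvar) ^ p * (1 - fps_X) ^ p * fps_right_inverse (1 - of_nat p * fps_X) 1"
    by (rule GC_main[OF assms(2)])
  finally show ?thesis .
qed


end
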